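(* Let $G$ be a graph and $k$ an integer, and assume: (A) $G$ contains no two adjacent vertices $u,w$ with $N(w)\subseteq N[u]$; and (B) there is no vertex $w$ of $G$ together with a partition $(C_1,C_2)$ of $N(w)$ such that $|C_1|\ge|C_2|$, $C_1$ and $C_2$ are cliques, and every vertex $c_1\in C_1$ lies in exactly one pair $\{c_1,c_2\}$ with $c_2\in C_2$ and $\{c_1,c_2\}\notin E(G)$. Let $v$ be a vertex of degree three with $N(v)=\{a,b,c\}$. Let $G'$ be the graph with vertex set $V(G)\setminus\{v\}$ whose edge set consists of the edges of $G-v$ together with the set $F$ of pairs $\{a,b\}$, $\{b,c\}$, $\{a,x\}$ for $x\in N_G(b)$, $\{b,y\}$ for $y\in N_G(c)$, and $\{c,z\}$ for $z\in N_G(a)$ (pairs containing $v$ being omitted). Then $G$ has a vertex cover of size $k$ if and only if $G'$ has a vertex cover of size $k$.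
   Context: All graphs are finite, simple, undirected. $N(x)=N_G(x)$ is the open and $N[x]=N(x)\cup\{x\}$ the closed neighborhood. A clique is a set of pairwise adjacent vertices. A vertex cover is a set of vertices containing at least one endpoint of every edge; "has a vertex cover of size $k$" means has a vertex cover of size at most $k$. *)

theory Defs
  imports Main
begin

definition simple_graph :: "'a set \<Rightarrow> 'a set set \<Rightarrow> bool" where
  "simple_graph V E \<longleftrightarrow> finite V \<and>
     (\<forall>e\<in>E. \<exists>x y. e = {x, y} \<and> x \<noteq> y \<and> x \<in> V \<and> y \<in> V)"

definition nbhd :: "'a set set \<Rightarrow> 'a \<Rightarrow> 'a set" where
  "nbhd E x = {y. {x, y} \<in> E}"

definition cnbhd :: "'a set set \<Rightarrow> 'a \<Rightarrow> 'a set" where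
  "cnbhd E x = insert x (nbhd E x)"

definition is_clique :: "'a set set \<Rightarrow> 'a set \<Rightarrow> bool" where
  "is_clique E C \<longleftrightarrow> (\<forall>x\<in>C. \<forall>y\<in>C. x \<noteq> y \<longrightarrow> {x, y} \<in> E)"

definition is_vertex_cover :: "'a set \<Rightarrow> 'a set set \<Rightarrow> 'a set \<Rightarrow> bool" where
  "is_vertex_cover V E C \<longleftrightarrow> C \<subseteq> V \<and> (\<forall>e\<in>E. e \<inter> C \<noteq> {})"

text \<open>"has a vertex cover of size k" = has a vertex cover of size at most k.\<close>
definition has_vc :: "'a set \<Rightarrow> 'a set set \<Rightarrow> int \<Rightarrow> bool" where
  "has_vc V E k \<longleftrightarrow> (\<exists>C. is_vertex_cover V E C \<and> int (card C) \<le> k)"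

definition new_edges :: "'a set set \<Rightarrow> 'a \<Rightarrow> 'a \<Rightarrow> 'a \<Rightarrow> 'a \<Rightarrow> 'a set set" where
  "new_edges E v a b c =
     {{p, q} | p q. p \<noteq> q \<and> p \<noteq> v \<and> q \<noteq> v \<and>
        ((p = a \<and> q = b) \<or> (p = b \<and> q = c) \<or>
         (p = a \<and> q \<in> nbhd E b) \<or> (p = b \<and> q \<in> nbhd E c) \<or> (p = c \<and> q \<in> nbhd E a))}"

definition reduced_edges :: "'a set set \<Rightarrow> 'a \<Rightarrow> 'a \<Rightarrow> 'a \<Rightarrow> 'a \<Rightarrow> 'a set set" where
  "reduced_edges E v a b c = {e \<in> E. v \<notin> e} \<union> new_edges E v a b c"

end

theory Submission
  imports Defs
begin

lemma edge_sub: "simple_graph V E \<Longrightarrow> e \<in> E \<Longrightarrow> e \<subseteq> V"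
  unfolding simple_graph_def by fastforce

lemma pair_hit: "p \<in> X \<or> q \<in> X \<Longrightarrow> e = {p,q} \<Longrightarrow> e \<inter> X \<noteq> {}"
  by auto

lemma noloop: "simple_graph V E \<Longrightarrow> {x} \<notin> E"
  unfolding simple_graph_def by (auto simp: doubleton_eq_iff)

lemma indep_pair:
  assumes A: "\<not> (\<exists>u\<in>V. \<exists>w\<in>V. {u, w} \<in> E \<and> nbhd E w \<subseteq> cnbhd E u)"
    and B: "\<not> (\<exists>w\<in>V. \<exists>C1 C2. C1 \<union> C2 = nbhd E w \<and> C1 \<inter> C2 = {} \<and>
               card C1 \<ge> card C2 \<and> is_clique E C1 \<and> is_clique E C2 \<and>
               (\<forall>c1\<in>C1. \<exists>!c2. c2 \<in> C2 \<and> {c1, c2} \<notin> E))"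
    and G: "simple_graph V E"
    and v: "v \<in> V"
    and d: "x \<noteq> y" "y \<noteq> z" "x \<noteq> z"
    and Nv: "nbhd E v = {x, y, z}"
  shows "{x, y} \<notin> E"
proof
  assume xy: "{x,y} \<in> E"
  have "x \<in> nbhd E v" "y \<in> nbhd E v" "z \<in> nbhd E v" using Nv by simp_all
  then have ev: "{v,x} \<in> E" "{v,y} \<in> E" "{v,z} \<in> E" by (simp_all add: nbhd_def)
  have ev': "{x,v} \<in> E" "{y,v} \<in> E" using ev by (simp_all add: insert_commute)
  have inV: "x \<in> V" "y \<in> V"
    using edge_sub[OF G ev(1)] edge_sub[OF G ev(2)] by blast+
  show False
  proof (cases "{x,z} \<in> E")
    case True
    have "nbhd E v \<subseteq> cnbhd E x"
      unfolding Nv cnbhd_def using xy True by (simp add: nbhd_def)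
    then show False
        apply -
        apply (rule notE[OF A])
        apply (rule bexI[OF _ inV(1)], rule bexI[OF _ v])
        using ev' by (intro conjI)
  next
    case nxz: False
    show False
    proof (cases "{y,z} \<in> E")
      case True
      have "{y,x} \<in> E" using xy by (simp add: insert_commute)
      then have "nbhd E v \<subseteq> cnbhd E y"
        unfolding Nv cnbhd_def using True by (simp add: nbhd_def)
      then show False
        apply -
        apply (rule notE[OF A])
        apply (rule bexI[OF _ inV(2)], rule bexI[OF _ v])
        using ev' by (intro conjI)
    next
      case False
      have 1: "{x,y} \<union> {z} = nbhd E v" using Nv by auto
      have 2: "{x,y} \<inter> {z} = {}" using d by blast
      have 3: "card {z} \<le> card {x,y}" using d by simp
      have 4: "is_clique E {x,y}" using xy unfolding is_clique_def by (auto simp: insert_commute)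
      have 5: "is_clique E {z}" unfolding is_clique_def by blast
      have 6: "\<forall>c1\<in>{x,y}. \<exists>!c2. c2 \<in> {z} \<and> {c1, c2} \<notin> E" using nxz False by (auto simp: insert_commute)
      show False
        apply (rule notE[OF B])
        apply (rule bexI[OF _ v])
        apply (rule exI[of _ "{x,y}"], rule exI[of _ "{z}"])
        using 1 2 3 4 5 6 by (intro conjI)
    qed
  qed
qed

theorem proposition6:
  fixes V :: "'a set" and E :: "'a set set" and k :: int and v a b c :: 'a
  assumes G: "simple_graph V E"
    and A: "\<not> (\<exists>u\<in>V. \<exists>w\<in>V. {u, w} \<in> E \<and> nbhd E w \<subseteq> cnbhd E u)"
    and B: "\<not> (\<exists>w\<in>V. \<exists>C1 C2. C1 \<union> C2 = nbhd E w \<and> C1 \<inter> C2 = {} \<and>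
               card C1 \<ge> card C2 \<and> is_clique E C1 \<and> is_clique E C2 \<and>
               (\<forall>c1\<in>C1. \<exists>!c2. c2 \<in> C2 \<and> {c1, c2} \<notin> E))"
    and v: "v \<in> V"
    and abc: "a \<noteq> b" "b \<noteq> c" "a \<noteq> c"
    and Nv: "nbhd E v = {a, b, c}"
  shows "has_vc V E k \<longleftrightarrow> has_vc (V - {v}) (reduced_edges E v a b c) k"
proof -
  have nab: "{a,b} \<notin> E" using indep_pair[OF A B G v abc Nv] .
  have nbc: "{b,c} \<notin> E" using indep_pair[OF A B G v, of b c a] abc Nv by (auto simp: insert_commute)
  have nac: "{a,c} \<notin> E" using indep_pair[OF A B G v, of a c b] abc Nv by (auto simp: insert_commute)
  have "a \<in> nbhd E v" "b \<in> nbhd E v" "c \<in> nbhd E v" using Nv by simp_all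
  then have ev: "{v,a} \<in> E" "{v,b} \<in> E" "{v,c} \<in> E" by (simp_all add: nbhd_def)
  have sg: "\<And>e. e \<in> E \<Longrightarrow> \<exists>x y. e = {x, y} \<and> x \<noteq> y \<and> x \<in> V \<and> y \<in> V"
    using G unfolding simple_graph_def by simp
  have fin: "finite V" using G unfolding simple_graph_def by blast
  have inV: "a \<in> V" "b \<in> V" "c \<in> V"
    using edge_sub[OF G ev(1)] edge_sub[OF G ev(2)] edge_sub[OF G ev(3)] by simp_all
  have noloop: "\<And>x. {x} \<notin> E" using noloop[OF G] .
  have vne: "v \<noteq> a" "v \<noteq> b" "v \<noteq> c" using ev noloop by force+
  let ?E' = "reduced_edges E v a b c"
  have Eold: "\<And>e. e \<in> E \<Longrightarrow> v \<notin> e \<Longrightarrow> e \<in> ?E'" unfolding reduced_edges_def by blast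
  have Eab: "{a,b} \<in> ?E'" "{b,c} \<in> ?E'"
    unfolding reduced_edges_def new_edges_def using abc vne by blast+
  have Ea: "\<And>x. x \<in> nbhd E b \<Longrightarrow> x \<noteq> v \<Longrightarrow> {a,x} \<in> ?E'"
  proof -
    fix x assume "x \<in> nbhd E b" "x \<noteq> v"
    moreover have "x \<noteq> a" using \<open>x \<in> nbhd E b\<close> nab unfolding nbhd_def by (auto simp: insert_commute)
    ultimately show "{a,x} \<in> ?E'" unfolding reduced_edges_def new_edges_def using vne by blast
  qed
  have Eb: "\<And>x. x \<in> nbhd E c \<Longrightarrow> x \<noteq> v \<Longrightarrow> {b,x} \<in> ?E'"
  proof -
    fix x assume "x \<in> nbhd E c" "x \<noteq> v"
    moreover have "x \<noteq> b" using \<open>x \<in> nbhd E c\<close> nbc unfolding nbhd_def by (auto simp: insert_commute)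
    ultimately show "{b,x} \<in> ?E'" unfolding reduced_edges_def new_edges_def using vne by blast
  qed
  have Ec: "\<And>x. x \<in> nbhd E a \<Longrightarrow> x \<noteq> v \<Longrightarrow> {c,x} \<in> ?E'"
  proof -
    fix x assume "x \<in> nbhd E a" "x \<noteq> v"
    moreover have "x \<noteq> c" using \<open>x \<in> nbhd E a\<close> nac unfolding nbhd_def by (auto simp: insert_commute)
    ultimately show "{c,x} \<in> ?E'" unfolding reduced_edges_def new_edges_def using vne by blast
  qed
  have Ecases: "\<And>e. e \<in> ?E' \<Longrightarrow> (e \<in> E \<and> v \<notin> e) \<or> e = {a,b} \<or> e = {b,c} \<or>
      (\<exists>x\<in>nbhd E b. x \<noteq> v \<and> e = {a,x}) \<or> (\<exists>x\<in>nbhd E c. x \<noteq> v \<and> e = {b,x}) \<or>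
      (\<exists>x\<in>nbhd E a. x \<noteq> v \<and> e = {c,x})"
    unfolding reduced_edges_def new_edges_def by blast
  show ?thesis
  proof
    assume "has_vc V E k"
    then obtain C where C: "C \<subseteq> V" "\<And>e. e \<in> E \<Longrightarrow> e \<inter> C \<noteq> {}" "int (card C) \<le> k"
      unfolding has_vc_def is_vertex_cover_def by blast
    have cov: "\<And>x y. {x,y} \<in> E \<Longrightarrow> x \<in> C \<or> y \<in> C" using C(2) by blast
    have nb: "\<And>x y. y \<in> nbhd E x \<Longrightarrow> x \<in> C \<or> y \<in> C" using cov unfolding nbhd_def by blast
    have finC: "finite C" using C(1) fin finite_subset by blast
    show "has_vc (V - {v}) ?E' k"
    proof (cases "v \<in> C")
      case False
      have "a \<in> C" "b \<in> C" "c \<in> C" using cov ev False by blast+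
      have "is_vertex_cover (V - {v}) ?E' C"
        unfolding is_vertex_cover_def
      proof (intro conjI ballI)
        show "C \<subseteq> V - {v}" using C(1) False by blast
        fix e assume "e \<in> ?E'"
        from Ecases[OF this] show "e \<inter> C \<noteq> {}"
          using C(2) \<open>a \<in> C\<close> \<open>b \<in> C\<close> \<open>c \<in> C\<close> by blast
      qed
      then show ?thesis using C(3) unfolding has_vc_def by blast
    next
      case True
      obtain m where m: "m \<in> {a,b,c}" and
        P: "a \<in> insert m C \<or> b \<in> insert m C" "b \<in> insert m C \<or> c \<in> insert m C"
          "\<forall>x\<in>nbhd E b. a \<in> insert m C \<or> x \<in> C"
          "\<forall>x\<in>nbhd E c. b \<in> insert m C \<or> x \<in> C"
          "\<forall>x\<in>nbhd E a. c \<in> insert m C \<or> x \<in> C"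
      proof -
        consider "a \<in> C" "b \<in> C" "c \<in> C" | "a \<notin> C" "b \<in> C" "c \<in> C"
          | "a \<in> C" "b \<notin> C" "c \<in> C" | "a \<in> C" "b \<in> C" "c \<notin> C"
          | "a \<in> C" "b \<notin> C" "c \<notin> C" | "a \<notin> C" "b \<in> C" "c \<notin> C"
          | "a \<notin> C" "b \<notin> C" "c \<in> C" | "a \<notin> C" "b \<notin> C" "c \<notin> C" by blast
        then show ?thesis
        proof cases
          case 1 then show ?thesis using that[of a] by auto
        next
          case 2 then show ?thesis using that[of a] nb by auto
        next
          case 3 then show ?thesis using that[of b] nb by auto
        next
          case 4 then show ?thesis using that[of c] nb by auto
        next
          case 5 then show ?thesis using that[of c] nb by blast
        next
          case 6 then show ?thesis using that[of a] nb by blast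
        next
          case 7 then show ?thesis using that[of b] nb by blast
        next
          case 8 then show ?thesis using that[of b] nb by blast
        qed
      qed
      let ?C' = "insert m (C - {v})"
      have "is_vertex_cover (V - {v}) ?E' ?C'"
        unfolding is_vertex_cover_def
      proof (intro conjI ballI)
        show "?C' \<subseteq> V - {v}" using C(1) m inV vne by blast
        fix e assume "e \<in> ?E'"
        have mv: "m \<noteq> v" using m vne by blast
        have hv: "\<And>y. y \<noteq> v \<Longrightarrow> y \<in> insert m C \<Longrightarrow> y \<in> ?C'" using mv by blast
        have Pab: "a \<in> ?C' \<or> b \<in> ?C'" using P(1) hv vne by blast
        have Pbc: "b \<in> ?C' \<or> c \<in> ?C'" using P(2) hv vne by blast
        from Ecases[OF \<open>e \<in> ?E'\<close>] show "e \<inter> ?C' \<noteq> {}"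
        proof (elim disjE)
          assume "e \<in> E \<and> v \<notin> e" then show ?thesis using C(2) by blast
        next
          assume "e = {a,b}" then show ?thesis by (rule pair_hit[OF Pab])
        next
          assume "e = {b,c}" then show ?thesis by (rule pair_hit[OF Pbc])
        next
          assume "\<exists>x\<in>nbhd E b. x \<noteq> v \<and> e = {a,x}"
          then obtain x where x: "x \<in> nbhd E b" "x \<noteq> v" "e = {a,x}" by blast
          have "a \<in> ?C' \<or> x \<in> ?C'" using P(3) x hv vne by blast
          then show ?thesis by (rule pair_hit[OF _ x(3)])
        next
          assume "\<exists>x\<in>nbhd E c. x \<noteq> v \<and> e = {b,x}"
          then obtain x where x: "x \<in> nbhd E c" "x \<noteq> v" "e = {b,x}" by blast
          have "b \<in> ?C' \<or> x \<in> ?C'" using P(4) x hv vne by blast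
          then show ?thesis by (rule pair_hit[OF _ x(3)])
        next
          assume "\<exists>x\<in>nbhd E a. x \<noteq> v \<and> e = {c,x}"
          then obtain x where x: "x \<in> nbhd E a" "x \<noteq> v" "e = {c,x}" by blast
          have "c \<in> ?C' \<or> x \<in> ?C'" using P(5) x hv vne by blast
          then show ?thesis by (rule pair_hit[OF _ x(3)])
        qed
      qed
      moreover have "card ?C' \<le> card C"
        using True finC card_gt_0_iff[of C] by (auto simp: card_insert_if)
      ultimately show ?thesis using C(3) unfolding has_vc_def by force
    qed
  next
    assume "has_vc (V - {v}) ?E' k"
    then obtain C where C: "C \<subseteq> V - {v}" "\<And>e. e \<in> ?E' \<Longrightarrow> e \<inter> C \<noteq> {}" "int (card C) \<le> k"
      unfolding has_vc_def is_vertex_cover_def by blast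
    have finC: "finite C" using C(1) fin finite_subset by blast
    have cov: "\<And>x y. {x,y} \<in> ?E' \<Longrightarrow> x \<in> C \<or> y \<in> C" using C(2) by blast
    have nbv: "\<And>x y. y \<in> nbhd E x \<Longrightarrow> y \<noteq> v \<Longrightarrow> x \<noteq> v \<Longrightarrow> x \<in> C \<or> y \<in> C"
      using cov Eold unfolding nbhd_def by blast
    show "has_vc V E k"
    proof (cases "a \<in> C \<and> b \<in> C \<and> c \<in> C")
      case True
      have "is_vertex_cover V E C"
        unfolding is_vertex_cover_def
      proof (intro conjI ballI)
        show "C \<subseteq> V" using C(1) by blast
        fix e assume e: "e \<in> E"
        show "e \<inter> C \<noteq> {}"
        proof (cases "v \<in> e")
          case False then show ?thesis using C(2) Eold e by blast
        next
          case True
          obtain x where "e = {v,x}" using sg[OF e] True by blast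
          then have "x \<in> {a,b,c}" using e Nv unfolding nbhd_def by auto
          then show ?thesis using \<open>e = {v,x}\<close> \<open>a \<in> C \<and> b \<in> C \<and> c \<in> C\<close> by blast
        qed
      qed
      then show ?thesis using C(3) unfolding has_vc_def by blast
    next
      case False
      obtain m where m: "m \<in> C" "m \<in> {a,b,c}"
        and P: "\<forall>x\<in>nbhd E m. x = v \<or> x \<in> C - {m}"
      proof -
        have ab: "a \<in> C \<or> b \<in> C" "b \<in> C \<or> c \<in> C" using cov Eab by blast+
        have ne: "\<And>x y. y \<in> nbhd E x \<Longrightarrow> x \<noteq> y" using noloop unfolding nbhd_def by force
        have nbV: "\<And>x. x \<in> {a,b,c} \<Longrightarrow> v \<notin> nbhd E x \<Longrightarrow> False"
          using ev unfolding nbhd_def by (auto simp: insert_commute)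
        have bnb: "a \<notin> nbhd E b" "c \<notin> nbhd E b" "b \<notin> nbhd E a" "c \<notin> nbhd E a" "a \<notin> nbhd E c" "b \<notin> nbhd E c"
          using nab nbc nac unfolding nbhd_def by (auto simp: insert_commute)
        have fa: "\<And>x. x \<in> nbhd E b \<Longrightarrow> x \<noteq> v \<Longrightarrow> a \<in> C \<or> x \<in> C" using Ea cov by blast
        have fb: "\<And>x. x \<in> nbhd E c \<Longrightarrow> x \<noteq> v \<Longrightarrow> b \<in> C \<or> x \<in> C" using Eb cov by blast
        have fc: "\<And>x. x \<in> nbhd E a \<Longrightarrow> x \<noteq> v \<Longrightarrow> c \<in> C \<or> x \<in> C" using Ec cov by blast
        have nbv': "\<And>x y. y \<in> nbhd E x \<Longrightarrow> y \<noteq> v \<Longrightarrow> x \<in> {a,b,c} \<Longrightarrow> x \<in> C \<or> y \<in> C"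
          using nbv vne by blast
        consider "a \<notin> C" | "a \<in> C" "b \<notin> C" | "a \<in> C" "b \<in> C" "c \<notin> C" using False by blast
        then show ?thesis
        proof cases
          case 1
          then have "b \<in> C" using ab by blast
          show ?thesis
          proof (rule that[of b])
            show "\<forall>x\<in>nbhd E b. x = v \<or> x \<in> C - {b}" using fa 1 ne by blast
          qed (use \<open>b \<in> C\<close> in auto)
        next
          case 2
          then have "c \<in> C" using ab by blast
          show ?thesis
          proof (rule that[of c])
            show "\<forall>x\<in>nbhd E c. x = v \<or> x \<in> C - {c}" using fb 2 ne by blast
          qed (use \<open>c \<in> C\<close> in auto)
        next
          case 3
          show ?thesis
          proof (rule that[of a])
            show "\<forall>x\<in>nbhd E a. x = v \<or> x \<in> C - {a}" using fc 3 ne by blast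
          qed (use 3 in auto)
        qed
      qed
      let ?C = "insert v (C - {m})"
      have "is_vertex_cover V E ?C"
        unfolding is_vertex_cover_def
      proof (intro conjI ballI)
        show "?C \<subseteq> V" using C(1) v by blast
        fix e assume e: "e \<in> E"
        show "e \<inter> ?C \<noteq> {}"
        proof (cases "v \<in> e")
          case True then show ?thesis by blast
        next
          case nv: False
          obtain x y where xy: "e = {x,y}" using sg[OF e] by blast
          show ?thesis
          proof (cases "m \<in> e")
            case False then show ?thesis using C(2) Eold e nv by blast
          next
            case True
            then have "y \<in> nbhd E m \<or> x \<in> nbhd E m" using xy e unfolding nbhd_def
              by (auto simp: insert_commute)
            then show ?thesis using P nv xy by blast
          qed
        qed
      qed
      moreover have "card ?C \<le> card C"
        using m finC C(1) card_gt_0_iff[of C] by (auto simp: card_insert_if card_Diff_singleton)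
      ultimately show ?thesis using C(3) unfolding has_vc_def by force
    qed
  qed
qed

end
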